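(* In the Setting, suppose that $r=\sqrt{K-\lambda_1}$ and $s=-\sqrt{K-\lambda_1}$. Then \[ m=\frac{(-s)(n-1)}{n+s},\quad V=\frac{n(-s)(n-1)}{n+s},\quad K=(-s)(n-1),\quad \lambda_1=(-s)(n+s-1),\quad \lambda_2=\frac{(-s)(n-1)(n+s)}{n}. \]
   Context: Setting: $\Gamma$ is a primitive strongly regular graph with parameters $(v,k,\lambda,\mu)$ (a $k$-regular graph on $v$ vertices, any two adjacent vertices having $\lambda$ and any two distinct non-adjacent vertices having $\mu$ common neighbours; primitive means $\Gamma$ and its complement are connected), with spectrum $k^1, r^f, s^g$ where $k>r>s$ and exponents are multiplicities. $C$ is a coclique in $\Gamma$ of size $c=\frac{vs}{s-k}$. A $K$-regular graph on $V$ vertices, neither complete nor edgeless, is a divisible design graph with parameters $(V,K,\lambda_1,\lambda_2;m,n)$ if its vertex set can be partitioned into $m$ canonical classes of size $n$ such that two distinct vertices in the same class have exactly $\lambda_1$ common neighbours and two vertices in different classes have exactly $\lambda_2$ common neighbours; it is proper unless $m=1$, $n=1$ or $\lambda_1=\lambda_2$. It is assumed that the subgraph $\Delta$ induced on $V(\Gamma)\setminus C$ is a proper divisible design graph with parameters $(V,K,\lambda_1,\lambda_2;m,n)$. *)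

theory Defs
  imports "HOL-Analysis.Analysis" "HOL-Library.Disjoint_Sets"
begin

text \<open>A finite simple graph is given by a finite vertex set X and a symmetric,
irreflexive adjacency relation E (only its restriction to X matters).\<close>

definition simple_graph :: "'a set \<Rightarrow> ('a \<Rightarrow> 'a \<Rightarrow> bool) \<Rightarrow> bool" where
  "simple_graph X E \<longleftrightarrow> finite X \<and> (\<forall>x\<in>X. \<forall>y\<in>X. E x y \<longleftrightarrow> E y x) \<and> (\<forall>x\<in>X. \<not> E x x)"

definition nbrs :: "'a set \<Rightarrow> ('a \<Rightarrow> 'a \<Rightarrow> bool) \<Rightarrow> 'a \<Rightarrow> 'a set" where
  "nbrs X E x = {y\<in>X. E x y}"

definition common_nbrs :: "'a set \<Rightarrow> ('a \<Rightarrow> 'a \<Rightarrow> bool) \<Rightarrow> 'a \<Rightarrow> 'a \<Rightarrow> nat" where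
  "common_nbrs X E x y = card (nbrs X E x \<inter> nbrs X E y)"

definition regular_graph :: "'a set \<Rightarrow> ('a \<Rightarrow> 'a \<Rightarrow> bool) \<Rightarrow> nat \<Rightarrow> bool" where
  "regular_graph X E k \<longleftrightarrow> simple_graph X E \<and> (\<forall>x\<in>X. card (nbrs X E x) = k)"

definition srg :: "'a set \<Rightarrow> ('a \<Rightarrow> 'a \<Rightarrow> bool) \<Rightarrow> nat \<Rightarrow> nat \<Rightarrow> nat \<Rightarrow> nat \<Rightarrow> bool" where
  "srg X E v k lam mu \<longleftrightarrow> regular_graph X E k \<and> card X = v \<and>
     (\<forall>x\<in>X. \<forall>y\<in>X. x \<noteq> y \<longrightarrow> E x y \<longrightarrow> common_nbrs X E x y = lam) \<and>
     (\<forall>x\<in>X. \<forall>y\<in>X. x \<noteq> y \<longrightarrow> \<not> E x y \<longrightarrow> common_nbrs X E x y = mu)"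

definition graph_connected :: "'a set \<Rightarrow> ('a \<Rightarrow> 'a \<Rightarrow> bool) \<Rightarrow> bool" where
  "graph_connected X E \<longleftrightarrow>
     (\<forall>x\<in>X. \<forall>y\<in>X. (\<lambda>a b. a \<in> X \<and> b \<in> X \<and> E a b)\<^sup>*\<^sup>* x y)"

definition complement_graph :: "('a \<Rightarrow> 'a \<Rightarrow> bool) \<Rightarrow> 'a \<Rightarrow> 'a \<Rightarrow> bool" where
  "complement_graph E x y \<longleftrightarrow> x \<noteq> y \<and> \<not> E x y"

definition primitive_srg :: "'a set \<Rightarrow> ('a \<Rightarrow> 'a \<Rightarrow> bool) \<Rightarrow> nat \<Rightarrow> nat \<Rightarrow> nat \<Rightarrow> nat \<Rightarrow> bool" where
  "primitive_srg X E v k lam mu \<longleftrightarrow> srg X E v k lam mu \<and>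
     graph_connected X E \<and> graph_connected X (complement_graph E)"

text \<open>Eigenvalues of the adjacency matrix (rows/columns indexed by X).
  Vectors are functions X \<rightarrow> real, extended by 0 outside X.\<close>
definition adj_eigenvalue :: "'a set \<Rightarrow> ('a \<Rightarrow> 'a \<Rightarrow> bool) \<Rightarrow> real \<Rightarrow> bool" where
  "adj_eigenvalue X E \<theta> \<longleftrightarrow> (\<exists>u :: 'a \<Rightarrow> real. (\<exists>x\<in>X. u x \<noteq> 0) \<and>
     (\<forall>x\<in>X. (\<Sum>y\<in>X. if E x y then u y else 0) = \<theta> * u x))"

definition adj_spectrum :: "'a set \<Rightarrow> ('a \<Rightarrow> 'a \<Rightarrow> bool) \<Rightarrow> real set" where
  "adj_spectrum X E = {\<theta>. adj_eigenvalue X E \<theta>}"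

definition coclique :: "'a set \<Rightarrow> ('a \<Rightarrow> 'a \<Rightarrow> bool) \<Rightarrow> 'a set \<Rightarrow> bool" where
  "coclique X E C \<longleftrightarrow> C \<subseteq> X \<and> (\<forall>x\<in>C. \<forall>y\<in>C. \<not> E x y)"

definition ddg_with_partition ::
  "'a set \<Rightarrow> ('a \<Rightarrow> 'a \<Rightarrow> bool) \<Rightarrow> 'a set set \<Rightarrow> nat \<Rightarrow> nat \<Rightarrow> nat \<Rightarrow> nat \<Rightarrow> nat \<Rightarrow> nat \<Rightarrow> bool" where
  "ddg_with_partition X E P V K lam1 lam2 m n \<longleftrightarrow>
     regular_graph X E K \<and> card X = V \<and>
     (\<exists>x\<in>X. \<exists>y\<in>X. x \<noteq> y \<and> \<not> E x y) \<and>
     (\<exists>x\<in>X. \<exists>y\<in>X. E x y) \<and>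
     partition_on X P \<and> card P = m \<and> (\<forall>B\<in>P. card B = n) \<and>
     (\<forall>B\<in>P. \<forall>x\<in>B. \<forall>y\<in>B. x \<noteq> y \<longrightarrow> common_nbrs X E x y = lam1) \<and>
     (\<forall>B\<in>P. \<forall>B'\<in>P. B \<noteq> B' \<longrightarrow> (\<forall>x\<in>B. \<forall>y\<in>B'. common_nbrs X E x y = lam2))"

definition ddg :: "'a set \<Rightarrow> ('a \<Rightarrow> 'a \<Rightarrow> bool) \<Rightarrow> nat \<Rightarrow> nat \<Rightarrow> nat \<Rightarrow> nat \<Rightarrow> nat \<Rightarrow> nat \<Rightarrow> bool" where
  "ddg X E V K lam1 lam2 m n \<longleftrightarrow> (\<exists>P. ddg_with_partition X E P V K lam1 lam2 m n)"

definition proper_ddg :: "'a set \<Rightarrow> ('a \<Rightarrow> 'a \<Rightarrow> bool) \<Rightarrow> nat \<Rightarrow> nat \<Rightarrow> nat \<Rightarrow> nat \<Rightarrow> nat \<Rightarrow> nat \<Rightarrow> bool" where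
  "proper_ddg X E V K lam1 lam2 m n \<longleftrightarrow> ddg X E V K lam1 lam2 m n \<and>
     m \<noteq> 1 \<and> n \<noteq> 1 \<and> lam1 \<noteq> lam2"

end

theory Submission
  imports Defs
begin

lemma alg:
  fixes a k n m V c mu t :: real
  assumes apos: "a > 0" and n1: "n \<noteq> 1" and m1: "m \<noteq> 1" and Vnm: "V = n*m" and Vpos: "V > 0"
    and mu: "mu = k - a^2" and ck: "c*k = V*a" and S2: "c*k + c*(c-1)*mu = V*a^2"
    and S3: "V*(a*n + t*(V-n)) = c*k^2" and S4: "c*(k^2+(c-1)*mu^2) = V*(a^2*n + t^2*(V-n))"
    and ta: "t \<noteq> a" and k0: "k \<noteq> 0"
  shows "k = n*a \<and> m = a*(n-1)/(n-a) \<and> t = a*(n-a)/n"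
proof -
  have c0: "c \<noteq> 0" using ck apos Vpos by auto
  have "c*(k + (c-1)*mu) = c*(k*a)" using S2 ck by (simp add: algebra_simps power2_eq_square)
  hence i: "k + (c-1)*mu = k*a" using c0 by simp
  have "V*(a*n + t*(V-n)) = V*(a*k)" using S3 ck by (simp add: algebra_simps power2_eq_square)
  hence ii: "a*n + t*(V-n) = a*k" using Vpos by simp
  have im: "(c-1)*mu = k*a - k" using i by linarith
  have "c*(c-1)*mu^2 = c*mu*((c-1)*mu)" by (simp add: power2_eq_square algebra_simps)
  also have "\<dots> = c*mu*(k*a-k)" by (simp only: im)
  finally have "c*(c-1)*mu^2 = (c*k)*mu*(a-1)" by (simp add: algebra_simps)
  hence A1: "c*(c-1)*mu^2 = V*(a*mu*(a-1))" using ck by simp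
  have A2: "c*k^2 = V*(a*k)" using ck by (simp add: power2_eq_square)
  have "c*(k^2+(c-1)*mu^2) = c*k^2 + c*(c-1)*mu^2" by (simp add: algebra_simps)
  also have "\<dots> = V*(a*k + a*mu*(a-1))" unfolding A1 A2 by (simp add: algebra_simps)
  finally have "V*(a*k + a*mu*(a-1)) = V*(a^2*n + t^2*(V-n))" using S4 by auto
  hence iii: "a*k + a*mu*(a-1) = a^2*n + t^2*(V-n)" using Vpos by simp
  define X where "X = V - n"
  define Y where "Y = V - k"
  have e1: "a*Y = X*(a-t)" using ii unfolding X_def Y_def by (simp add: algebra_simps)
  have e2: "X*(a-t)^2 = a^2*(Y - a^2 + a)"
  proof -
    have "X*(a-t)^2 = X*a^2 - 2*a*(t*X) + t^2*X" by (simp add: power2_eq_square algebra_simps)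
    also have "t*X = a*k - a*n" using ii unfolding X_def by (simp add: algebra_simps)
    also have "t^2*X = a*k + a*mu*(a-1) - a^2*n" using iii unfolding X_def by (simp add: algebra_simps)
    finally show ?thesis unfolding X_def Y_def mu by (simp add: power2_eq_square algebra_simps)
  qed
  have "k*(k + (c-1)*mu) = k*(k*a)" using i by simp
  hence "k*k + (c*k - k)*mu = k*k*a" by (simp add: algebra_simps)
  hence "k*k + (V*a - k)*(k - a^2) = k*k*a" using ck mu by simp
  hence "a*(Y*(k - a^2)) = a*(k*a*(a-1))" unfolding Y_def by (simp add: algebra_simps power2_eq_square)
  hence e3: "Y*(k - a^2) = k*a*(a-1)" using apos by simp
  have "a^2*Y^2 = (a*Y)^2" by (simp add: power_mult_distrib)
  also have "\<dots> = (X*(a-t))^2" using e1 by simp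
  also have "\<dots> = X*(X*(a-t)^2)" by (simp add: power_mult_distrib power2_eq_square)
  also have "\<dots> = a^2*(X*(Y - a^2 + a))" using e2 by simp
  finally have e4: "Y^2 = X*(Y - a^2 + a)" using apos by simp
  have XY: "X = Y + k - n" unfolding X_def Y_def by simp
  have e5: "Y*(n-a) = n*a*(a-1)"
    using e4 e3 unfolding XY by (simp add: algebra_simps power2_eq_square) 
  have n0: "n \<noteq> 0" using Vnm Vpos by auto
  have X0: "X \<noteq> 0" using n0 m1 unfolding X_def Vnm by (simp add: algebra_simps)
  have Y0: "Y \<noteq> 0" using e1 X0 ta apos by auto
  have "Y*(k*(n-a)) = Y*(n*(k - a^2))" using e3 e5 by (metis mult.assoc mult.commute)
  hence "k*(n-a) = n*(k - a^2)" using Y0 by simp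
  hence "a*k = a*(n*a)" by (auto simp: algebra_simps power2_eq_square)
  hence kn: "k = n*a" using apos by (auto simp: algebra_simps)
  have "n*((m-a)*(n-a)) = n*(a*(a-1))" using e5 unfolding Y_def Vnm kn by (simp add: algebra_simps)
  hence ma: "(m-a)*(n-a) = a*(a-1)" using n0 by simp
  have na: "n \<noteq> a"
  proof
    assume "n = a" then have "a*(a-1) = 0" using ma by simp
    then have "a = 1" using apos by simp
    then show False using n1 \<open>n = a\<close> by simp
  qed
  hence "m = a + a*(a-1)/(n-a)" using ma by (simp add: field_simps)
  hence meq: "m = a*(n-1)/(n-a)" using na by (simp add: field_simps)
  have a1: "a \<noteq> 1"
  proof
    assume "a = 1"
    hence "m = (n-1)/(n-1)" using meq by simp
    hence "m = 1" using n1 by simp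
    with m1 show False by simp
  qed
  have "n*((m-1)*t) = n*(a*(a-1))" using ii unfolding kn Vnm by (simp add: algebra_simps)
  hence mt: "(m-1)*t = a*(a-1)" using n0 by simp
  have "m - 1 = n*(a-1)/(n-a)" using meq na by (simp add: field_simps)
  hence "(n*(a-1)/(n-a))*t = a*(a-1)" using mt by simp
  hence "(a-1)*(n*t) = (a-1)*(a*(n-a))" using na by (simp add: field_simps)
  hence "n*t = a*(n-a)" using a1 by simp
  hence "t = a*(n-a)/n" using n0 by (simp add: field_simps)
  then show ?thesis using kn meq by simp
qed

lemma alg0:
  fixes a c k w V mu :: real
  assumes apos: "a > 0" and k0: "k \<ge> 0" and cak: "c * (a+k) = w * a" and VY: "V = w - c"
    and cnt: "k^2 = mu * w + k - mu" and mu: "mu = k - a^2"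
  shows "c * (c * mu + (k - mu)) - 2 * a * (c * k) + V * a^2 = 0"
proof -
  have "V * a = w * a - c * a" unfolding VY by (simp add: algebra_simps)
  also have "\<dots> = c * k" using cak by (simp add: algebra_simps)
  finally have "a * (V * a) = a * (c * k)" by simp
  hence Va: "V * a^2 = a * (c * k)" by (simp add: power2_eq_square algebra_simps)
  have "(w - k - 1) * mu = mu * w - k * mu - mu" by (simp add: algebra_simps)
  also have "\<dots> = k^2 - k - k * mu" using cnt by linarith
  also have "\<dots> = k * (k - mu - 1)" by (simp add: algebra_simps power2_eq_square)
  also have "\<dots> = k * (a^2 - 1)" using mu by simp
  finally have "(w - k - 1) * mu = k * (a^2 - 1)" .
  hence "a * ((w - k - 1) * mu) = a * (k * (a^2 - 1))" by simp
  hence "(w * a - k * a - a) * mu = k * a * (a^2-1)" by (simp add: algebra_simps)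
  hence "(w * a - k - a) * mu = k * a * (a^2-1) + (k * a - k) * mu" by (simp add: algebra_simps)
  also have "\<dots> = (a+k) * (k * (a-1))" unfolding mu by (simp add: algebra_simps power2_eq_square)
  finally have X1: "(w * a - k - a) * mu = (a+k) * (k * (a-1))" .
  have "(a+k) * ((c-1) * mu) = (c * (a+k) - (a+k)) * mu" by (simp add: algebra_simps)
  also have "\<dots> = (w * a - k - a) * mu" using cak by simp
  also have "\<dots> = (a+k) * (k * (a-1))" by (rule X1)
  finally have "(a+k) * ((c-1) * mu) = (a+k) * (k * (a-1))" .
  moreover have "a + k \<noteq> 0" using apos k0 by simp
  ultimately have cm: "(c-1) * mu = k * (a-1)" by simp
  have "c * (c * mu + (k - mu)) = c * ((c-1) * mu) + c * k" by (simp add: algebra_simps)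
  also have "\<dots> = c * (k * (a-1)) + c * k" by (simp only: cm)
  finally show ?thesis using Va by (simp add: algebra_simps)
qed


lemma card_filter_sum:
  "finite S \<Longrightarrow> real (card {y\<in>S. P y}) = (\<Sum>y\<in>S. of_bool (P y))"
proof -
  assume f: "finite S"
  have "real (card {y\<in>S. P y}) = (\<Sum>y\<in>{y\<in>S. P y}. (1::real))" by simp
  also have "\<dots> = (\<Sum>y\<in>S. if P y then 1 else 0)" by (rule sum.inter_filter[OF f])
  also have "\<dots> = (\<Sum>y\<in>S. of_bool (P y))" by (intro sum.cong) auto
  finally show ?thesis .
qed

lemma deg_sum: "finite S \<Longrightarrow> real (card (nbrs S E x)) = (\<Sum>y\<in>S. of_bool (E x y))"
  unfolding nbrs_def by (rule card_filter_sum)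

lemma common_sum: "finite S \<Longrightarrow>
   real (common_nbrs S E x y) = (\<Sum>w\<in>S. of_bool (E x w) * of_bool (E y w))"
proof -
  assume f: "finite S"
  have "nbrs S E x \<inter> nbrs S E y = {w\<in>S. E x w \<and> E y w}" unfolding nbrs_def by auto
  then show ?thesis unfolding common_nbrs_def using card_filter_sum[OF f, of "\<lambda>w. E x w \<and> E y w"]
    by (simp add: of_bool_conj)
qed

lemma quad_swap:
  fixes f :: "'a \<Rightarrow> 'b \<Rightarrow> real"
  shows "(\<Sum>z\<in>C. \<Sum>z'\<in>C. (\<Sum>x\<in>Y. f x z * f x z')^2) =
         (\<Sum>x\<in>Y. \<Sum>y\<in>Y. (\<Sum>z\<in>C. f x z * f y z)^2)"
proof -
  have "(\<Sum>z\<in>C. \<Sum>z'\<in>C. (\<Sum>x\<in>Y. f x z * f x z')^2)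
      = (\<Sum>z\<in>C. \<Sum>z'\<in>C. \<Sum>x\<in>Y. \<Sum>y\<in>Y. f x z * f x z' * (f y z * f y z'))"
    by (simp add: power2_eq_square sum_product)
  also have "\<dots> = (\<Sum>z\<in>C. \<Sum>x\<in>Y. \<Sum>z'\<in>C. \<Sum>y\<in>Y. f x z * f x z' * (f y z * f y z'))"
    by (rule sum.cong[OF refl], rule sum.swap)
  also have "\<dots> = (\<Sum>x\<in>Y. \<Sum>z\<in>C. \<Sum>z'\<in>C. \<Sum>y\<in>Y. f x z * f x z' * (f y z * f y z'))"
    by (rule sum.swap)
  also have "\<dots> = (\<Sum>x\<in>Y. \<Sum>z\<in>C. \<Sum>y\<in>Y. \<Sum>z'\<in>C. f x z * f x z' * (f y z * f y z'))"
    by (intro sum.cong refl, rule sum.swap)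
  also have "\<dots> = (\<Sum>x\<in>Y. \<Sum>y\<in>Y. \<Sum>z\<in>C. \<Sum>z'\<in>C. f x z * f x z' * (f y z * f y z'))"
    by (intro sum.cong refl, rule sum.swap)
  also have "\<dots> = (\<Sum>x\<in>Y. \<Sum>y\<in>Y. (\<Sum>z\<in>C. f x z * f y z)^2)"
    by (simp add: power2_eq_square sum_product mult_ac)
  finally show ?thesis .
qed

lemma srg_basic:
  assumes "srg X E v k lam mu"
  shows "finite X" "\<And>x y. x\<in>X \<Longrightarrow> y\<in>X \<Longrightarrow> E x y = E y x" "\<And>x. x\<in>X \<Longrightarrow> \<not> E x x"
    "\<And>x. x\<in>X \<Longrightarrow> (\<Sum>y\<in>X. of_bool (E x y)) = real k" "card X = v"
  using assms unfolding srg_def regular_graph_def simple_graph_def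
  by (auto simp: deg_sum[symmetric] nbrs_def Int_def)

lemma common_formula:
  assumes "srg X E v k lam mu" "x\<in>X" "w\<in>X"
  shows "real (common_nbrs X E x w) = mu + (real lam - mu) * of_bool (E x w) + (real k - mu) * of_bool (w = x)"
proof -
  note b = srg_basic[OF assms(1)]
  show ?thesis
  proof (cases "w = x")
    case True
    then show ?thesis using assms b unfolding common_nbrs_def srg_def regular_graph_def by auto
  next
    case False
    then show ?thesis using assms unfolding srg_def by (cases "E x w") auto
  qed
qed

lemma common_expand:
  assumes "srg X E v k lam mu" "x\<in>X"
  shows "(\<Sum>w\<in>X. real (common_nbrs X E x w) * f w) = (\<Sum>y\<in>X. of_bool (E x y) * (\<Sum>w\<in>X. of_bool (E y w) * f w))"
proof -
  note b = srg_basic[OF assms(1)]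
  have "(\<Sum>w\<in>X. real (common_nbrs X E x w) * f w) = (\<Sum>w\<in>X. \<Sum>y\<in>X. of_bool (E x y) * of_bool (E y w) * f w)"
  proof (rule sum.cong[OF refl])
    fix w assume w: "w\<in>X"
    have "real (common_nbrs X E x w) = (\<Sum>y\<in>X. of_bool (E x y) * of_bool (E y w))"
      using common_sum[OF b(1)] b(2)[OF w] by simp
    then show "real (common_nbrs X E x w) * f w = (\<Sum>y\<in>X. of_bool (E x y) * of_bool (E y w) * f w)"
      by (simp add: sum_distrib_right)
  qed
  also have "\<dots> = (\<Sum>y\<in>X. \<Sum>w\<in>X. of_bool (E x y) * of_bool (E y w) * f w)" by (rule sum.swap)
  also have "\<dots> = (\<Sum>y\<in>X. of_bool (E x y) * (\<Sum>w\<in>X. of_bool (E y w) * f w))"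
    by (simp add: sum_distrib_left mult_ac)
  finally show ?thesis .
qed

lemma common_formula_sum:
  assumes "srg X E v k lam mu" "x\<in>X"
  shows "(\<Sum>w\<in>X. real (common_nbrs X E x w) * f w) = mu * (\<Sum>w\<in>X. f w) + (real lam - mu) * (\<Sum>w\<in>X. of_bool (E x w) * f w) + (real k - mu) * f x"
proof -
  note b = srg_basic[OF assms(1)]
  have "(\<Sum>w\<in>X. real (common_nbrs X E x w) * f w) = (\<Sum>w\<in>X. mu * f w + (real lam - mu) * (of_bool (E x w) * f w) + (real k - mu) * (of_bool (w = x) * f w))"
    by (intro sum.cong refl, simp add: common_formula[OF assms] algebra_simps)
  also have "\<dots> = mu * (\<Sum>w\<in>X. f w) + (real lam - mu) * (\<Sum>w\<in>X. of_bool (E x w) * f w) + (real k - mu) * (\<Sum>w\<in>X. of_bool (w = x) * f w)"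
    by (simp add: sum.distrib sum_distrib_left)
  also have "(\<Sum>w\<in>X. of_bool (w = x) * f w) = (\<Sum>w\<in>X. if w = x then f w else 0)"
    by (intro sum.cong) auto
  also have "\<dots> = f x" using b(1) assms(2) by simp
  finally show ?thesis .
qed

lemma eig_rel:
  assumes s: "srg X E v k lam mu" and e: "adj_eigenvalue X E \<theta>" and ne: "\<theta> \<noteq> real k"
  shows "\<theta>^2 = (real lam - real mu) * \<theta> + (real k - real mu)"
proof -
  note b = srg_basic[OF s]
  obtain u where u0: "\<exists>x\<in>X. u x \<noteq> 0" and ev: "\<And>x. x\<in>X \<Longrightarrow> (\<Sum>y\<in>X. if E x y then u y else 0) = \<theta> * u x"
    using e unfolding adj_eigenvalue_def by blast
  have ev': "(\<Sum>y\<in>X. of_bool (E x y) * u y) = \<theta> * u x" if "x\<in>X" for x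
  proof -
    have "(\<Sum>y\<in>X. of_bool (E x y) * u y) = (\<Sum>y\<in>X. if E x y then u y else 0)"
      by (intro sum.cong) auto
    then show ?thesis using ev[OF that] by simp
  qed
  have "(\<Sum>x\<in>X. \<Sum>y\<in>X. of_bool (E x y) * u y) = (\<Sum>y\<in>X. \<Sum>x\<in>X. of_bool (E x y) * u y)" by (rule sum.swap)
  also have "\<dots> = (\<Sum>y\<in>X. real k * u y)"
  proof (rule sum.cong[OF refl])
    fix y assume y: "y\<in>X"
    have "(\<Sum>x\<in>X. (of_bool (E x y) :: real)) = (\<Sum>x\<in>X. of_bool (E y x))" using b(2)[OF _ y] by (intro sum.cong) auto
    then have "(\<Sum>x\<in>X. (of_bool (E x y) :: real)) = real k" using b(4)[OF y] by simp
    then show "(\<Sum>x\<in>X. of_bool (E x y) * u y) = real k * u y" by (simp add: sum_distrib_right[symmetric])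
  qed
  finally have "\<theta> * (\<Sum>x\<in>X. u x) = real k * (\<Sum>x\<in>X. u x)"
    by (simp add: ev' sum_distrib_left)
  with ne have S0: "(\<Sum>x\<in>X. u x) = 0" by auto
  obtain x where x: "x\<in>X" "u x \<noteq> 0" using u0 by blast
  have "(\<Sum>w\<in>X. real (common_nbrs X E x w) * u w) = (\<Sum>y\<in>X. of_bool (E x y) * (\<theta> * u y))"
    using common_expand[OF s x(1)] ev' by simp
  also have "\<dots> = \<theta> * \<theta> * u x" using ev'[OF x(1)] by (simp add: sum_distrib_left[symmetric] mult_ac)
  finally have "\<theta> * \<theta> * u x = (real lam - mu) * (\<theta> * u x) + (real k - mu) * u x"
    using common_formula_sum[OF s x(1), of u] S0 ev'[OF x(1)] by simp
  then have "(\<theta> * \<theta> - ((real lam - mu) * \<theta> + (real k - mu))) * u x = 0" by (simp add: algebra_simps)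
  with x(2) show ?thesis by (simp add: power2_eq_square)
qed

lemma srg_count:
  assumes s: "srg X E v k lam mu" and x: "x\<in>X"
  shows "real k ^ 2 = mu * v + (real lam - mu) * k + (real k - mu)"
proof -
  note b = srg_basic[OF s]
  have "(\<Sum>w\<in>X. real (common_nbrs X E x w) * 1) = (\<Sum>y\<in>X. of_bool (E x y) * real k)"
    using common_expand[OF s x, of "\<lambda>_. 1"] b(4) by simp
  also have "\<dots> = real k * real k" using b(4)[OF x] by (simp add: sum_distrib_right[symmetric])
  finally show ?thesis using common_formula_sum[OF s x, of "\<lambda>_. 1"] b(4)[OF x] b(5) by (simp add: power2_eq_square)
qed


lemma sum_delta_ob: "finite C \<Longrightarrow> z \<in> C \<Longrightarrow> (\<Sum>z'\<in>C. (of_bool (z' = z) :: real)) = 1"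
proof -
  assume "finite C" "z \<in> C"
  have "(\<Sum>z'\<in>C. (of_bool (z' = z) :: real)) = (\<Sum>z'\<in>C. if z' = z then 1 else 0)" by (intro sum.cong) auto
  then show ?thesis using \<open>finite C\<close> \<open>z \<in> C\<close> by simp
qed

lemma sum_if_block:
  fixes p q :: real
  assumes "finite Y" "B \<subseteq> Y"
  shows "(\<Sum>y\<in>Y. if y \<in> B then p else q) = p * real (card B) + q * (real (card Y) - real (card B))"
proof -
  have fB: "finite B" using assms finite_subset by blast
  have "(\<Sum>y\<in>Y. if y \<in> B then p else q) = (\<Sum>y\<in>Y-B. if y \<in> B then p else q) + (\<Sum>y\<in>B. if y \<in> B then p else q)"
    by (rule sum.subset_diff[OF assms(2) assms(1)])
  also have "(\<Sum>y\<in>Y-B. if y \<in> B then p else q) = (\<Sum>y\<in>Y-B. q)" by (intro sum.cong) auto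
  also have "(\<Sum>y\<in>B. if y \<in> B then p else q) = (\<Sum>y\<in>B. p)" by (intro sum.cong) auto
  finally have 1: "(\<Sum>y\<in>Y. if y \<in> B then p else q) = real (card (Y - B)) * q + real (card B) * p" by simp
  have "real (card (Y - B)) = real (card Y) - real (card B)"
    using card_Diff_subset[OF fB assms(2)] card_mono[OF assms(1,2)] by (simp add: of_nat_diff)
  then show ?thesis using 1 by (simp add: mult.commute)
qed


theorem mainTheorem9:
  fixes X :: "'a set" and E :: "'a \<Rightarrow> 'a \<Rightarrow> bool" and C :: "'a set"
    and v k lam mu :: nat and r s :: real
    and V K lam1 lam2 m n :: nat
  assumes prim: "primitive_srg X E v k lam mu"
    and spec: "adj_spectrum X E = {real k, r, s}"
    and ord: "real k > r" "r > s"
    and cocl: "coclique X E C"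
    and csize: "real (card C) = real v * s / (s - real k)"
    and ddg: "proper_ddg (X - C) E V K lam1 lam2 m n"
    and rK: "r = sqrt (real K - real lam1)"
    and sK: "s = - sqrt (real K - real lam1)"
  shows "real m = (-s) * (real n - 1) / (real n + s)
    \<and> real V = real n * (-s) * (real n - 1) / (real n + s)
    \<and> real K = (-s) * (real n - 1)
    \<and> real lam1 = (-s) * (real n + s - 1)
    \<and> real lam2 = (-s) * (real n - 1) * (real n + s) / real n"
proof -
  have srgG: "srg X E v k lam mu" using prim unfolding primitive_srg_def by simp
  note b = srg_basic[OF srgG]
  have CX: "C \<subseteq> X" and coc: "\<And>x y. x\<in>C \<Longrightarrow> y\<in>C \<Longrightarrow> \<not> E x y"
    using cocl unfolding coclique_def by auto
  have finC: "finite C" using CX b(1) finite_subset by blast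
  obtain P where dp: "ddg_with_partition (X - C) E P V K lam1 lam2 m n"
    and m1: "m \<noteq> 1" and n1: "n \<noteq> 1" and l12: "lam1 \<noteq> lam2"
    using ddg unfolding proper_ddg_def ddg_def by blast
  define Y where "Y = X - C"
  define a where "a = - s"
  have finY: "finite Y" using b(1) Y_def by simp
  have YX: "Y \<subseteq> X" using Y_def by auto
  note D = dp[unfolded ddg_with_partition_def, folded Y_def]
  have d1: "regular_graph Y E K" using D by (rule conjunct1)
  have cardY: "card Y = V" using D[THEN conjunct2] by (rule conjunct1)
  have ex2: "\<exists>x\<in>Y. \<exists>y\<in>Y. x \<noteq> y \<and> \<not> E x y" using D[THEN conjunct2, THEN conjunct2] by (rule conjunct1)
  have part: "partition_on Y P" using D[THEN conjunct2, THEN conjunct2, THEN conjunct2, THEN conjunct2] by (rule conjunct1)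
  have cardP: "card P = m" using D[THEN conjunct2, THEN conjunct2, THEN conjunct2, THEN conjunct2, THEN conjunct2] by (rule conjunct1)
  have d7: "\<forall>B\<in>P. card B = n" using D[THEN conjunct2, THEN conjunct2, THEN conjunct2, THEN conjunct2, THEN conjunct2, THEN conjunct2] by (rule conjunct1)
  have d8: "\<forall>B\<in>P. \<forall>x\<in>B. \<forall>y\<in>B. x \<noteq> y \<longrightarrow> common_nbrs Y E x y = lam1"
    using D[THEN conjunct2, THEN conjunct2, THEN conjunct2, THEN conjunct2, THEN conjunct2, THEN conjunct2, THEN conjunct2] by (rule conjunct1)
  have d9: "\<forall>B\<in>P. \<forall>B'\<in>P. B \<noteq> B' \<longrightarrow> (\<forall>x\<in>B. \<forall>y\<in>B'. common_nbrs Y E x y = lam2)"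
    using D[THEN conjunct2, THEN conjunct2, THEN conjunct2, THEN conjunct2, THEN conjunct2, THEN conjunct2, THEN conjunct2] by (rule conjunct2)
  have regY: "\<And>x. x\<in>Y \<Longrightarrow> card (nbrs Y E x) = K" using d1 unfolding regular_graph_def by blast
  have cardB: "\<And>B. B\<in>P \<Longrightarrow> card B = n" using d7 by blast
  have L1: "\<And>B x y. B\<in>P \<Longrightarrow> x\<in>B \<Longrightarrow> y\<in>B \<Longrightarrow> x \<noteq> y \<Longrightarrow> common_nbrs Y E x y = lam1" using d8 by blast
  have L2: "\<And>B B' x y. B\<in>P \<Longrightarrow> B'\<in>P \<Longrightarrow> B \<noteq> B' \<Longrightarrow> x\<in>B \<Longrightarrow> y\<in>B' \<Longrightarrow> common_nbrs Y E x y = lam2" using d9 by blast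
  obtain x0 where x0: "x0 \<in> Y" using ex2 by blast
  have rsp: "adj_eigenvalue X E r" "adj_eigenvalue X E s" using spec unfolding adj_spectrum_def by auto
  have er: "r^2 = (real lam - real mu) * r + (real k - real mu)" using eig_rel[OF srgG rsp(1)] ord by simp
  have es: "s^2 = (real lam - real mu) * s + (real k - real mu)" using eig_rel[OF srgG rsp(2)] ord by simp
  have sq: "sqrt (real K - real lam1) > 0" using ord(2) rK sK by simp
  have Kl: "real K - real lam1 > 0" using sq by simp
  have apos: "a > 0" using sq sK a_def by simp
  have a2: "a^2 = real K - real lam1" using sK a_def Kl by simp
  have rs: "r = -s" using rK sK by simp
  have "(real lam - real mu) * (2*a) = 0" using er es rs a_def by (auto simp: algebra_simps)
  hence lm: "real lam = real mu" using apos a_def by auto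
  have mu_eq: "real mu = real k - a^2" using es lm a_def by (simp add: power2_eq_square)
  have x0X: "x0 \<in> X" using x0 YX by auto
  have cnt0: "real k ^ 2 = real mu * real v + (real lam - real mu) * real k + (real k - real mu)"
    by (rule srg_count[OF srgG x0X])
  have cnt: "real k ^ 2 = real mu * real v + real k - real mu" using cnt0 unfolding lm by simp
  define c where "c = real (card C)"
  have cak: "c * (a + real k) = real v * a"
  proof -
    have "s - real k \<noteq> 0" using apos a_def by simp
    then have "c * (s - real k) = real v * s" using csize c_def by (simp add: field_simps)
    then show ?thesis using a_def by (simp add: algebra_simps)
  qed
  have cC: "card C \<le> card X" by (rule card_mono[OF b(1) CX])
  have VY: "real V = real v - c"
  proof -
    have "card Y = card X - card C" unfolding Y_def by (rule card_Diff_subset[OF finC CX])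
    then show ?thesis using cardY cC b(5) c_def by (simp add: of_nat_diff)
  qed
  define d where "d x = (\<Sum>z\<in>C. (of_bool (E x z) :: real))" for x
  have colk: "(\<Sum>x\<in>Y. (of_bool (E x z) :: real)) = real k" if z: "z\<in>C" for z
  proof -
    have zX: "z\<in>X" using z CX by auto
    have "real k = (\<Sum>x\<in>X. (of_bool (E z x) :: real))" using b(4)[OF zX] by simp
    also have "\<dots> = (\<Sum>x\<in>Y. (of_bool (E z x) :: real)) + (\<Sum>x\<in>C. of_bool (E z x))"
      unfolding Y_def using sum.subset_diff[OF CX b(1)] by simp
    also have "(\<Sum>x\<in>C. (of_bool (E z x) :: real)) = 0" using coc z by (auto intro: sum.neutral)
    also have "(\<Sum>x\<in>Y. (of_bool (E z x) :: real)) = (\<Sum>x\<in>Y. of_bool (E x z))"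
      using b(2) zX YX by (intro sum.cong) auto
    finally show ?thesis by simp
  qed
  have sumd: "(\<Sum>x\<in>Y. d x) = c * real k"
  proof -
    have "(\<Sum>x\<in>Y. d x) = (\<Sum>z\<in>C. \<Sum>x\<in>Y. (of_bool (E x z) :: real))" unfolding d_def by (rule sum.swap)
    also have "\<dots> = (\<Sum>z\<in>C. real k)" using colk by simp
    finally show ?thesis using c_def by simp
  qed
  have Gz: "(\<Sum>x\<in>Y. (of_bool (E x z) :: real) * of_bool (E x z')) = real mu + (real k - real mu) * of_bool (z' = z)"
    if z: "z\<in>C" "z'\<in>C" for z z'
  proof -
    have zX: "z\<in>X" "z'\<in>X" using z CX by auto
    have "real (common_nbrs X E z z') = (\<Sum>w\<in>X. (of_bool (E z w) :: real) * of_bool (E z' w))"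
      using common_sum[OF b(1)] by simp
    also have "\<dots> = (\<Sum>w\<in>Y. (of_bool (E z w) :: real) * of_bool (E z' w)) + (\<Sum>w\<in>C. (of_bool (E z w) :: real) * of_bool (E z' w))"
      unfolding Y_def using sum.subset_diff[OF CX b(1)] by simp
    also have "(\<Sum>w\<in>C. (of_bool (E z w) :: real) * of_bool (E z' w)) = 0" using coc z by (auto intro: sum.neutral)
    also have "(\<Sum>w\<in>Y. (of_bool (E z w) :: real) * of_bool (E z' w)) = (\<Sum>x\<in>Y. of_bool (E x z) * of_bool (E x z'))"
      using b(2) zX YX by (intro sum.cong) auto
    finally have 1: "real (common_nbrs X E z z') = (\<Sum>x\<in>Y. (of_bool (E x z) :: real) * of_bool (E x z'))" by simp
    have 2: "real (common_nbrs X E z z') = real mu + (real lam - real mu) * of_bool (E z z') + (real k - real mu) * of_bool (z' = z)"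
      by (rule common_formula[OF srgG zX])
    show ?thesis using 1 2 coc[OF z] by simp
  qed
  have sumd2: "(\<Sum>x\<in>Y. d x ^ 2) = c * (c * real mu + (real k - real mu))"
  proof -
    have "(\<Sum>x\<in>Y. d x ^2) = (\<Sum>x\<in>Y. \<Sum>z\<in>C. \<Sum>z'\<in>C. (of_bool (E x z) :: real) * of_bool (E x z'))"
      unfolding d_def by (simp add: power2_eq_square sum_product)
    also have "\<dots> = (\<Sum>z\<in>C. \<Sum>x\<in>Y. \<Sum>z'\<in>C. (of_bool (E x z) :: real) * of_bool (E x z'))" by (rule sum.swap)
    also have "\<dots> = (\<Sum>z\<in>C. \<Sum>z'\<in>C. \<Sum>x\<in>Y. (of_bool (E x z) :: real) * of_bool (E x z'))"
      by (rule sum.cong[OF refl], rule sum.swap)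
    also have "\<dots> = (\<Sum>z\<in>C. \<Sum>z'\<in>C. real mu + (real k - real mu) * of_bool (z' = z))"
      by (intro sum.cong refl Gz)
    also have "\<dots> = (\<Sum>z\<in>C. c * real mu + (real k - real mu))"
    proof (intro sum.cong refl)
      fix z assume z: "z\<in>C"
      have "(\<Sum>z'\<in>C. real mu + (real k - real mu) * of_bool (z' = z)) = c * real mu + (real k - real mu) * (\<Sum>z'\<in>C. of_bool (z' = z))"
        by (simp add: sum.distrib sum_distrib_left c_def)
      then show "(\<Sum>z'\<in>C. real mu + (real k - real mu) * of_bool (z' = z)) = c * real mu + (real k - real mu)"
        using sum_delta_ob[OF finC z] by simp
    qed
    finally show ?thesis using c_def by simp
  qed
  have var: "(\<Sum>x\<in>Y. (d x - a)^2) = 0"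
  proof -
    have e: "(d x - a)^2 = d x ^ 2 - (2*a) * d x + a^2" for x
      by (simp add: power2_eq_square algebra_simps)
    have "(\<Sum>x\<in>Y. (d x - a)^2) = (\<Sum>x\<in>Y. d x ^ 2 - (2*a) * d x + a^2)" by (simp only: e)
    also have "\<dots> = (\<Sum>x\<in>Y. d x ^ 2) - (\<Sum>x\<in>Y. (2*a) * d x) + (\<Sum>x\<in>Y. a^2)"
      by (simp only: sum.distrib sum_subtractf)
    also have "(\<Sum>x\<in>Y. (2*a) * d x) = (2*a)*(\<Sum>x\<in>Y. d x)" by (rule sum_distrib_left[symmetric])
    also have "(\<Sum>x\<in>Y. a^2) = real (card Y) * a^2" by simp
    finally have ex: "(\<Sum>x\<in>Y. (d x - a)^2) = (\<Sum>x\<in>Y. d x ^ 2) - (2*a)*(\<Sum>x\<in>Y. d x) + real (card Y) * a^2" .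
    have "(\<Sum>x\<in>Y. d x ^ 2) - (2*a)*(\<Sum>x\<in>Y. d x) + real (card Y) * a^2 = c * (c * real mu + (real k - real mu)) - 2*a*(c * real k) + real V * a^2"
      using sumd sumd2 cardY by simp
    also have "\<dots> = 0" by (rule alg0[OF apos _ cak VY cnt mu_eq]) simp
    finally show ?thesis using ex by simp
  qed
  have nn: "\<And>x. x\<in>Y \<Longrightarrow> 0 \<le> (d x - a)^2" by simp
  have all0: "\<forall>x\<in>Y. (d x - a)^2 = 0" using iffD1[OF sum_nonneg_eq_0_iff[OF finY nn] var] .
  have dxa: "d x = a" if x: "x\<in>Y" for x
  proof -
    have "(d x - a)^2 = 0" using all0 x by blast
    then show ?thesis by simp
  qed
  have Kk: "real K = real k - a"
  proof -
    have "real k = (\<Sum>y\<in>X. (of_bool (E x0 y) :: real))" using b(4)[OF x0X] by simp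
    also have "\<dots> = (\<Sum>y\<in>Y. (of_bool (E x0 y) :: real)) + (\<Sum>y\<in>C. of_bool (E x0 y))"
      unfolding Y_def by (rule sum.subset_diff[OF CX b(1)])
    also have "(\<Sum>y\<in>Y. (of_bool (E x0 y) :: real)) = real K" using deg_sum[OF finY, of E x0] regY[OF x0] by simp
    also have "(\<Sum>y\<in>C. (of_bool (E x0 y) :: real)) = d x0" unfolding d_def ..
    finally show ?thesis using dxa[OF x0] by simp
  qed
  have lam1_eq: "real lam1 = real K - a^2" using a2 by simp
  define t where "t = real mu - real lam2"
  define H where "H x y = (\<Sum>z\<in>C. (of_bool (E x z) :: real) * of_bool (E y z))" for x y
  have Hxx: "H x x = a" if "x\<in>Y" for x
  proof -
    have "H x x = d x" unfolding H_def d_def by (intro sum.cong) auto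
    then show ?thesis using dxa[OF that] by simp
  qed
  have Hxy: "H x y = real mu - real (common_nbrs Y E x y)" if xy: "x\<in>Y" "y\<in>Y" "x \<noteq> y" for x y
  proof -
    have xX: "x\<in>X" "y\<in>X" using xy YX by auto
    have "real (common_nbrs X E x y) = (\<Sum>w\<in>X. (of_bool (E x w) :: real) * of_bool (E y w))"
      using common_sum[OF b(1)] by simp
    also have "\<dots> = (\<Sum>w\<in>Y. (of_bool (E x w) :: real) * of_bool (E y w)) + H x y"
      unfolding Y_def H_def by (rule sum.subset_diff[OF CX b(1)])
    also have "(\<Sum>w\<in>Y. (of_bool (E x w) :: real) * of_bool (E y w)) = real (common_nbrs Y E x y)"
      using common_sum[OF finY] by simp
    finally have 1: "real (common_nbrs X E x y) = real (common_nbrs Y E x y) + H x y" .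
    have 2: "real (common_nbrs X E x y) = real mu + (real lam - real mu) * of_bool (E x y) + (real k - real mu) * of_bool (y = x)"
      by (rule common_formula[OF srgG xX])
    show ?thesis using 1 2 lm xy(3) by simp
  qed
  have Psub: "B \<subseteq> Y" if "B \<in> P" for B using part that unfolding partition_on_def by auto
  have Pcov: "\<exists>B\<in>P. x \<in> B" if "x \<in> Y" for x using part that unfolding partition_on_def by auto
  have Pdisj: "B = B'" if "B\<in>P" "B'\<in>P" "x\<in>B" "x\<in>B'" for B B' x
    using part that unfolding partition_on_def disjoint_def by blast
  have finP: "finite P" using finite_elements[OF finY part] .
  have Hrow: "H x y = (if y \<in> B then a else t)" if xB: "B\<in>P" "x\<in>B" "y\<in>Y" for B x y
  proof (cases "y = x")
    case True
    then show ?thesis using Hxx xB Psub by auto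
  next
    case False
    have xY: "x\<in>Y" using xB Psub by auto
    show ?thesis
    proof (cases "y \<in> B")
      case True
      then have "common_nbrs Y E x y = lam1" using L1[OF xB(1,2) True] False by simp
      then show ?thesis using Hxy[OF xY xB(3)] False True lam1_eq Kk mu_eq by simp
    next
      case yB: False
      obtain B' where B': "B'\<in>P" "y\<in>B'" using Pcov[OF xB(3)] by blast
      have "B \<noteq> B'" using yB B' by auto
      then have "common_nbrs Y E x y = lam2" using L2[OF xB(1) B'(1) _ xB(2) B'(2)] by simp
      then show ?thesis using Hxy[OF xY xB(3)] False yB t_def by simp
    qed
  qed
  have n_le: "card B \<le> card Y" if "B\<in>P" for B using card_mono[OF finY Psub[OF that]] .
  have rowH: "(\<Sum>y\<in>Y. H x y) = a * real n + t * (real V - real n)"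
    and rowH2: "(\<Sum>y\<in>Y. (H x y)^2) = a^2 * real n + t^2 * (real V - real n)" if x: "x\<in>Y" for x
  proof -
    obtain B where B: "B\<in>P" "x\<in>B" using Pcov[OF x] by blast
    have "(\<Sum>y\<in>Y. H x y) = (\<Sum>y\<in>Y. if y \<in> B then a else t)" using Hrow[OF B] by (intro sum.cong) auto
    also have "\<dots> = a * real (card B) + t * (real (card Y) - real (card B))" by (rule sum_if_block[OF finY Psub[OF B(1)]])
    finally show "(\<Sum>y\<in>Y. H x y) = a * real n + t * (real V - real n)" using cardB[OF B(1)] cardY by simp
    have "(\<Sum>y\<in>Y. (H x y)^2) = (\<Sum>y\<in>Y. if y \<in> B then a^2 else t^2)" using Hrow[OF B] by (intro sum.cong) auto
    also have "\<dots> = a^2 * real (card B) + t^2 * (real (card Y) - real (card B))" by (rule sum_if_block[OF finY Psub[OF B(1)]])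
    finally show "(\<Sum>y\<in>Y. (H x y)^2) = a^2 * real n + t^2 * (real V - real n)" using cardB[OF B(1)] cardY by simp
  qed
  have sumH: "real V * (a * real n + t * (real V - real n)) = c * real k ^ 2"
  proof -
    have "(\<Sum>x\<in>Y. \<Sum>y\<in>Y. H x y) = (\<Sum>x\<in>Y. \<Sum>y\<in>Y. \<Sum>z\<in>C. (of_bool (E x z) :: real) * of_bool (E y z))"
      unfolding H_def ..
    also have "\<dots> = (\<Sum>x\<in>Y. \<Sum>z\<in>C. \<Sum>y\<in>Y. (of_bool (E x z) :: real) * of_bool (E y z))"
      by (rule sum.cong[OF refl], rule sum.swap)
    also have "\<dots> = (\<Sum>z\<in>C. \<Sum>x\<in>Y. \<Sum>y\<in>Y. (of_bool (E x z) :: real) * of_bool (E y z))"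
      by (rule sum.swap)
    also have "\<dots> = (\<Sum>z\<in>C. (\<Sum>x\<in>Y. (of_bool (E x z) :: real)) * (\<Sum>y\<in>Y. of_bool (E y z)))"
      by (simp only: sum_product)
    also have "\<dots> = (\<Sum>z\<in>C. real k * real k)" using colk by simp
    finally have 1: "(\<Sum>x\<in>Y. \<Sum>y\<in>Y. H x y) = c * real k ^ 2" using c_def by (simp add: power2_eq_square)
    have "(\<Sum>x\<in>Y. \<Sum>y\<in>Y. H x y) = (\<Sum>x\<in>Y. a * real n + t * (real V - real n))" using rowH by simp
    then show ?thesis using 1 cardY by simp
  qed
  have trH: "c * (real k ^ 2 + (c - 1) * real mu ^ 2) = real V * (a^2 * real n + t^2 * (real V - real n))"
  proof -
    have q: "(\<Sum>z\<in>C. \<Sum>z'\<in>C. (\<Sum>x\<in>Y. (of_bool (E x z) :: real) * of_bool (E x z'))^2) =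
         (\<Sum>x\<in>Y. \<Sum>y\<in>Y. (\<Sum>z\<in>C. (of_bool (E x z) :: real) * of_bool (E y z))^2)"
      by (rule quad_swap)
    have "(\<Sum>z\<in>C. \<Sum>z'\<in>C. (\<Sum>x\<in>Y. (of_bool (E x z) :: real) * of_bool (E x z'))^2)
        = (\<Sum>z\<in>C. \<Sum>z'\<in>C. (real mu + (real k - real mu) * of_bool (z' = z))^2)"
      by (intro sum.cong refl) (simp add: Gz)
    also have "\<dots> = (\<Sum>z\<in>C. \<Sum>z'\<in>C. real mu ^ 2 + (real k ^ 2 - real mu ^ 2) * of_bool (z' = z))"
      by (intro sum.cong refl) (simp add: power2_eq_square algebra_simps)
    also have "\<dots> = (\<Sum>z\<in>C. c * real mu ^ 2 + (real k ^ 2 - real mu ^ 2))"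
    proof (rule sum.cong[OF refl])
      fix z assume z: "z\<in>C"
      have "(\<Sum>z'\<in>C. real mu ^ 2 + (real k ^ 2 - real mu ^ 2) * of_bool (z' = z)) = c * real mu ^ 2 + (real k ^ 2 - real mu ^ 2) * (\<Sum>z'\<in>C. of_bool (z' = z))"
        by (simp add: sum.distrib sum_distrib_left c_def)
      then show "(\<Sum>z'\<in>C. real mu ^ 2 + (real k ^ 2 - real mu ^ 2) * of_bool (z' = z)) = c * real mu ^ 2 + (real k ^ 2 - real mu ^ 2)"
        using sum_delta_ob[OF finC z] by simp
    qed
    also have "\<dots> = c * (c * real mu ^ 2 + (real k ^ 2 - real mu ^ 2))" using c_def by simp
    finally have 1: "(\<Sum>x\<in>Y. \<Sum>y\<in>Y. (H x y)^2) = c * (c * real mu ^ 2 + (real k ^ 2 - real mu ^ 2))"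
      using q unfolding H_def by simp
    have "(\<Sum>x\<in>Y. \<Sum>y\<in>Y. (H x y)^2) = (\<Sum>x\<in>Y. a^2 * real n + t^2 * (real V - real n))" using rowH2 by simp
    then have "real V * (a^2 * real n + t^2 * (real V - real n)) = c * (c * real mu ^ 2 + (real k ^ 2 - real mu ^ 2))"
      using 1 cardY by simp
    then show ?thesis by (simp add: algebra_simps)
  qed
  have VnmN: "card Y = n * m"
  proof -
    have "card Y = card (\<Union>P)" using part unfolding partition_on_def by simp
    also have "\<dots> = sum card P"
      using part unfolding partition_on_def
      by (intro card_Union_disjoint) (auto intro: finite_subset[OF _ finY])
    also have "\<dots> = sum (\<lambda>_. n) P" using cardB by simp
    finally show ?thesis using cardP by simp
  qed
  have Vnm: "real V = real n * real m" using VnmN cardY by simp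
  have Vpos: "real V > 0"
  proof -
    have "Y \<noteq> {}" using x0 by auto
    then have "card Y > 0" using finY by (simp add: card_gt_0_iff)
    then show ?thesis using cardY by simp
  qed
  have ckV: "c * real k = real V * a"
  proof -
    have "(\<Sum>x\<in>Y. d x) = (\<Sum>x\<in>Y. a)" using dxa by simp
    then show ?thesis using sumd cardY by simp
  qed
  have S2: "c * real k + c * (c - 1) * real mu = real V * a^2"
  proof -
    have "(\<Sum>x\<in>Y. d x ^ 2) = (\<Sum>x\<in>Y. a^2)" using dxa by simp
    then have "c * (c * real mu + (real k - real mu)) = real V * a^2" using sumd2 cardY by simp
    then show ?thesis by (simp add: algebra_simps)
  qed
  have ta: "t \<noteq> a"
  proof
    assume "t = a"
    then have "real mu - real lam2 = real mu - real lam1" using t_def lam1_eq Kk mu_eq by simp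
    then show False using l12 by simp
  qed
  have k0: "real k \<noteq> 0" using Kk apos by simp
  have main: "real k = real n * a \<and> real m = a * (real n - 1) / (real n - a) \<and> t = a * (real n - a) / real n"
    by (rule alg[OF apos _ _ Vnm Vpos mu_eq ckV S2 sumH trH ta k0]) (use n1 m1 in simp_all)
  have n0: "real n \<noteq> 0"
  proof
    assume "real n = 0"
    then have "real V = 0" using Vnm by simp
    then show False using Vpos by simp
  qed
  have r1: "real m = (-s) * (real n - 1) / (real n + s)" using main a_def by simp
  have r2: "real V = real n * (-s) * (real n - 1) / (real n + s)" using main a_def Vnm by simp
  have r3: "real K = (-s) * (real n - 1)" using main a_def Kk by (simp add: algebra_simps)
  have r4: "real lam1 = (-s) * (real n + s - 1)" using main a_def Kk lam1_eq by (simp add: algebra_simps power2_eq_square)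
  have r5: "real lam2 = (-s) * (real n - 1) * (real n + s) / real n"
  proof -
    have "real lam2 = real mu - t" using t_def by simp
    also have "\<dots> = real n * a - a^2 - a * (real n - a) / real n" using main mu_eq by simp
    also have "\<dots> = a * (real n - 1) * (real n - a) / real n" using n0 by (simp add: field_simps power2_eq_square)
    finally show ?thesis using a_def by simp
  qed
  show ?thesis using r1 r2 r3 r4 r5 by blast
qed
end
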